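(* Let $(X,\|\cdot\|)$ be a real Banach space and $C\subseteq B_X$ a nonempty absolutely convex closed subset such that every convex combination of slices of $C$ has $\|\cdot\|$-diameter $2$. Then for every $\varepsilon>0$ there is an equivalent norm $|\cdot|$ on $X$ such that every convex combination of slices of $B_{(X,|\cdot|)}$ has $|\cdot|$-diameter at least $2-\varepsilon$.
   Context: For a bounded set $A$ in a Banach space, a slice of $A$ is a nonempty set of the form $S(A,f,\alpha)=\{a\in A: f(a)>\sup_Af-\alpha\}$ with $f$ a nonzero continuous linear functional and $\alpha>0$. A convex combination of slices of $A$ is a Minkowski sum $\sum_{i=1}^n\lambda_iS_i=\{\sum_i\lambda_is_i: s_i\in S_i\}$ with $S_i$ slices of $A$, $\lambda_i>0$, $\sum_i\lambda_i=1$. Absolutely convex means convex and symmetric ($C=-C$). *)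

theory Defs
  imports "HOL-Analysis.Analysis"
begin

definition slice :: "'a set \<Rightarrow> ('a \<Rightarrow> real) \<Rightarrow> real \<Rightarrow> 'a set" where
  "slice A f \<alpha> = {a \<in> A. f a > (SUP x\<in>A. f x) - \<alpha>}"

definition is_slice :: "'a::real_normed_vector set \<Rightarrow> 'a set \<Rightarrow> bool" where
  "is_slice A S \<longleftrightarrow> (\<exists>f \<alpha>. bounded_linear f \<and> f \<noteq> (\<lambda>_. 0) \<and> \<alpha> > 0 \<and>
      S = slice A f \<alpha> \<and> S \<noteq> {})"

definition is_ccs :: "'a::real_normed_vector set \<Rightarrow> 'a set \<Rightarrow> bool" where
  "is_ccs A D \<longleftrightarrow> (\<exists>n::nat. \<exists>l::nat \<Rightarrow> real. \<exists>S::nat \<Rightarrow> 'a set.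
      n \<ge> 1 \<and> (\<forall>i<n. l i > 0 \<and> is_slice A (S i)) \<and> (\<Sum>i<n. l i) = 1 \<and>
      D = {(\<Sum>i<n. l i *\<^sub>R s i) | s. \<forall>i<n. s i \<in> S i})"

definition is_norm :: "('a::real_vector \<Rightarrow> real) \<Rightarrow> bool" where
  "is_norm N \<longleftrightarrow> (\<forall>x. N x \<ge> 0) \<and> (\<forall>x. N x = 0 \<longleftrightarrow> x = 0) \<and>
     (\<forall>c x. N (c *\<^sub>R x) = \<bar>c\<bar> * N x) \<and> (\<forall>x y. N (x + y) \<le> N x + N y)"

definition equiv_norm :: "('a::real_normed_vector \<Rightarrow> real) \<Rightarrow> bool" where
  "equiv_norm N \<longleftrightarrow> is_norm N \<and>
     (\<exists>a b. 0 < a \<and> 0 < b \<and> (\<forall>x. a * norm x \<le> N x \<and> N x \<le> b * norm x))"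

definition ndiam :: "('a::real_vector \<Rightarrow> real) \<Rightarrow> 'a set \<Rightarrow> real" where
  "ndiam N S = (SUP p\<in>S \<times> S. N (fst p - snd p))"

end

theory Submission imports Defs begin

definition Gs :: "'a::real_normed_vector set \<Rightarrow> 'a \<Rightarrow> real set" where
  "Gs B x = {t. 0 < t \<and> (\<exists>b\<in>B. x = t *\<^sub>R b)}"

definition gau :: "'a::real_normed_vector set \<Rightarrow> 'a \<Rightarrow> real" where
  "gau B x = Inf (Gs B x)"

locale gset =
  fixes B :: "'a::real_normed_vector set" and r R :: real
  assumes cvx: "convex B" and sym: "\<And>b. b \<in> B \<Longrightarrow> - b \<in> B"
    and rpos: "0 < r" and inner: "cball 0 r \<subseteq> B" and outer: "B \<subseteq> cball 0 R" and Rpos: "0 < R"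
begin

lemma zero_in: "0 \<in> B" using inner rpos by auto

lemma star: "b \<in> B \<Longrightarrow> 0 \<le> s \<Longrightarrow> s \<le> 1 \<Longrightarrow> s *\<^sub>R b \<in> B"
  using convexD[OF cvx, of b 0 s "1-s"] zero_in by auto

lemma G_up: "t \<in> Gs B x \<Longrightarrow> t \<le> t' \<Longrightarrow> t' \<in> Gs B x"
proof -
  assume t: "t \<in> Gs B x" and tt: "t \<le> t'"
  then obtain b where tp: "0 < t" and b: "b \<in> B" and x: "x = t *\<^sub>R b" by (auto simp: Gs_def)
  have t'p: "0 < t'" using tp tt by linarith
  have "(t/t') *\<^sub>R b \<in> B" using star[OF b] tp tt t'p by auto
  moreover have "x = t' *\<^sub>R ((t/t') *\<^sub>R b)" using x t'p by simp
  ultimately show ?thesis using t'p unfolding Gs_def by blast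
qed

lemma G_big: "norm x < t * r \<Longrightarrow> 0 < t \<Longrightarrow> t \<in> Gs B x"
proof -
  assume a: "norm x < t * r" "0 < t"
  have "norm ((1/t) *\<^sub>R x) \<le> r" using a by (simp add: field_simps)
  hence "(1/t) *\<^sub>R x \<in> B" using inner by auto
  moreover have "x = t *\<^sub>R ((1/t) *\<^sub>R x)" using a by simp
  ultimately show ?thesis using a unfolding Gs_def by blast
qed

lemma G_bound: "t \<in> Gs B x \<Longrightarrow> norm x \<le> t * R"
proof -
  assume "t \<in> Gs B x"
  then obtain b where tp: "0 < t" and b: "b \<in> B" and x: "x = t *\<^sub>R b" by (auto simp: Gs_def)
  have "norm b \<le> R" using outer b by auto
  thus ?thesis using x tp by (simp add: mult_left_mono)
qed


lemma G_ne: "Gs B x \<noteq> {}"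
proof -
  have "norm x < (norm x / r + 1) * r" using rpos by (simp add: field_simps)
  moreover have "0 < norm x / r + 1" using rpos by (simp add: add_nonneg_pos)
  ultimately show ?thesis using G_big by blast
qed

lemma G_bdd: "bdd_below (Gs B x)"
  unfolding bdd_below_def Gs_def by (rule exI[of _ 0]) auto

lemma gau_le: "t \<in> Gs B x \<Longrightarrow> gau B x \<le> t"
  unfolding gau_def by (rule cInf_lower[OF _ G_bdd])

lemma gau_lower: "norm x / R \<le> gau B x"
  unfolding gau_def
proof (rule cInf_greatest[OF G_ne])
  fix t assume "t \<in> Gs B x"
  from G_bound[OF this] Rpos show "norm x / R \<le> t" by (simp add: field_simps)
qed

lemma gau_approx: "gau B x < z \<Longrightarrow> \<exists>t\<in>Gs B x. t < z"
  unfolding gau_def using cInf_lessD[OF G_ne] by blast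

lemma gau_upper: "gau B x \<le> norm x / r"
proof (rule ccontr)
  assume nt: "\<not> ?thesis"
  define y where "y = norm x / r"
  define g where "g = gau B x"
  have lt: "y < g" using nt unfolding y_def g_def by simp
  define t where "t = (g + y) / 2"
  have yt: "y < t" unfolding t_def using lt by (simp add: field_simps)
  have tg: "t < g" unfolding t_def using lt by (simp add: field_simps)
  have "0 \<le> y" using rpos unfolding y_def by simp
  hence t0: "0 < t" using yt by linarith
  have "norm x < t * r" using rpos yt unfolding y_def by (simp add: field_simps)
  hence "norm x < t * r" "0 < t" using t0 by auto
  hence "t \<in> Gs B x" by (rule G_big)
  hence "gau B x \<le> t" by (rule gau_le)
  thus False using tg unfolding g_def by simp
qed

lemma gau_nonneg: "0 \<le> gau B x"
  using gau_lower[of x] Rpos by (meson divide_nonneg_pos norm_ge_zero order_trans)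

lemma gau_zero: "gau B x = 0 \<longleftrightarrow> x = 0"
proof
  assume "gau B x = 0" thus "x = 0" using gau_lower[of x] Rpos by (simp add: field_simps)
next
  assume "x = 0" thus "gau B x = 0" using gau_upper[of x] gau_nonneg[of x] by simp
qed

lemma gau_scale_le: "c \<noteq> 0 \<Longrightarrow> gau B (c *\<^sub>R x) \<le> \<bar>c\<bar> * gau B x"
proof (rule field_le_epsilon)
  fix e :: real assume c: "c \<noteq> 0" and e: "0 < e"
  have "gau B x < gau B x + e / \<bar>c\<bar>" using e c by simp
  then obtain t where t: "t \<in> Gs B x" "t < gau B x + e / \<bar>c\<bar>" using gau_approx by blast
  then obtain b where tp: "0 < t" and b: "b \<in> B" and xb: "x = t *\<^sub>R b" by (auto simp: Gs_def)
  have "sgn c *\<^sub>R b \<in> B" using b sym c by (cases "c > 0") (auto simp: sgn_if)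
  moreover have "c *\<^sub>R x = (\<bar>c\<bar> * t) *\<^sub>R (sgn c *\<^sub>R b)" using xb
    by (simp add: sgn_if abs_if)
  moreover have "0 < \<bar>c\<bar> * t" using tp c by simp
  ultimately have "\<bar>c\<bar> * t \<in> Gs B (c *\<^sub>R x)" unfolding Gs_def by blast
  hence "gau B (c *\<^sub>R x) \<le> \<bar>c\<bar> * t" by (rule gau_le)
  also have "\<dots> \<le> \<bar>c\<bar> * (gau B x + e / \<bar>c\<bar>)" using t(2) c by simp
  also have "\<dots> = \<bar>c\<bar> * gau B x + e" using c by (simp add: field_simps)
  finally show "gau B (c *\<^sub>R x) \<le> \<bar>c\<bar> * gau B x + e" .
qed

lemma gau_scale: "gau B (c *\<^sub>R x) = \<bar>c\<bar> * gau B x"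
proof (cases "c = 0")
  case True thus ?thesis using gau_zero by simp
next
  case False
  have "gau B x = gau B ((1/c) *\<^sub>R (c *\<^sub>R x))" using False by simp
  also have "\<dots> \<le> \<bar>1/c\<bar> * gau B (c *\<^sub>R x)" using False by (intro gau_scale_le) simp
  finally have "\<bar>c\<bar> * gau B x \<le> gau B (c *\<^sub>R x)" using False by (simp add: field_simps)
  with gau_scale_le[OF False, of x] show ?thesis by simp
qed

lemma G_add: "s \<in> Gs B x \<Longrightarrow> t \<in> Gs B y \<Longrightarrow> s + t \<in> Gs B (x + y)"
proof -
  assume "s \<in> Gs B x" "t \<in> Gs B y"
  then obtain b1 b2 where sp: "0 < s" and tp: "0 < t" and b1: "b1 \<in> B" and b2: "b2 \<in> B"
    and x: "x = s *\<^sub>R b1" and y: "y = t *\<^sub>R b2" by (auto simp: Gs_def)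
  have "(s/(s+t)) *\<^sub>R b1 + (t/(s+t)) *\<^sub>R b2 \<in> B"
    using convexD[OF cvx b1 b2, of "s/(s+t)" "t/(s+t)"] sp tp by (simp add: add_divide_distrib[symmetric])
  moreover have "x + y = (s+t) *\<^sub>R ((s/(s+t)) *\<^sub>R b1 + (t/(s+t)) *\<^sub>R b2)"
    using x y sp tp by (simp add: scaleR_add_right)
  moreover have "0 < s + t" using sp tp by simp
  ultimately show ?thesis unfolding Gs_def by blast
qed

lemma gau_triangle: "gau B (x + y) \<le> gau B x + gau B y"
proof (rule field_le_epsilon)
  fix e :: real assume e: "0 < e"
  obtain s where s: "s \<in> Gs B x" "s < gau B x + e/2" using gau_approx[of x "gau B x + e/2"] e by auto
  obtain t where t: "t \<in> Gs B y" "t < gau B y + e/2" using gau_approx[of y "gau B y + e/2"] e by auto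
  have "gau B (x + y) \<le> s + t" using G_add[OF s(1) t(1)] by (rule gau_le)
  thus "gau B (x + y) \<le> gau B x + gau B y + e" using s t by simp
qed

lemma gau_norm: "is_norm (gau B)"
  unfolding is_norm_def using gau_nonneg gau_zero gau_scale gau_triangle by blast

lemma gau_equiv: "equiv_norm (gau B)"
proof -
  have "\<forall>x. 1 / R * norm x \<le> gau B x \<and> gau B x \<le> 1 / r * norm x"
    using gau_lower gau_upper by simp
  thus ?thesis unfolding equiv_norm_def using gau_norm rpos Rpos
    by (intro conjI exI[of _ "1/R"] exI[of _ "1/r"]) auto
qed

lemma gau_B: "b \<in> B \<Longrightarrow> gau B b \<le> 1"
proof -
  assume b: "b \<in> B"
  have "b = 1 *\<^sub>R b" by simp
  moreover have "0 < (1::real)" by simp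
  ultimately have "1 \<in> Gs B b" unfolding Gs_def using b by blast
  thus ?thesis by (rule gau_le)
qed

lemma gau_unit: "gau B x \<le> 1 \<Longrightarrow> 0 < h \<Longrightarrow> (1/(1+h)) *\<^sub>R x \<in> B"
proof -
  assume a: "gau B x \<le> 1" "0 < h"
  hence "gau B x < 1 + h" by simp
  then obtain t where t: "t \<in> Gs B x" "t < 1 + h" using gau_approx by blast
  have "1 + h \<in> Gs B x" using G_up[OF t(1)] t(2) by simp
  then obtain b where b: "b \<in> B" "x = (1+h) *\<^sub>R b" unfolding Gs_def by blast
  have nz: "1 + h \<noteq> 0" using a(2) by simp
  have "(1/(1+h)) *\<^sub>R x = b" unfolding b(2) using nz by simp
  thus ?thesis using b(1) by simp
qed

lemma gau_ball_norm: "gau B x \<le> 1 \<Longrightarrow> norm x \<le> R"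
proof -
  assume a: "gau B x \<le> 1"
  have "norm x / R \<le> 1" using gau_lower[of x] a by (rule order_trans)
  thus ?thesis using Rpos by (simp add: divide_le_eq)
qed

end

lemma bl_bdd: "bounded_linear (f::'a::real_normed_vector \<Rightarrow> real) \<Longrightarrow> A \<subseteq> cball 0 M \<Longrightarrow> bdd_above (f ` A)"
proof -
  assume bl: "bounded_linear f" and A: "A \<subseteq> cball 0 M"
  obtain K where K: "\<And>x. norm (f x) \<le> norm x * K" "0 < K"
    using bounded_linear.pos_bounded[OF bl] by blast
  have "\<forall>x\<in>A. f x \<le> M * K"
  proof
    fix x assume "x \<in> A"
    hence "norm x \<le> M" using A by auto
    hence "norm x * K \<le> M * K" using K(2) by (simp add: mult_right_mono)
    have "f x \<le> norm (f x)" by simp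
    also have "\<dots> \<le> norm x * K" by (rule K(1))
    finally show "f x \<le> M * K" using \<open>norm x * K \<le> M * K\<close> by (rule order_trans)
  qed
  thus ?thesis by (auto simp: bdd_above_def)
qed

lemma key:
  fixes C :: "'a::real_normed_vector set"
  assumes C: "C \<noteq> {}" "C \<subseteq> cball 0 1" and dp: "0 < \<delta>"
    and BB: "B = {x + y | x y. x \<in> C \<and> y \<in> cball 0 \<delta>}"
    and B'sup: "\<And>f::'a \<Rightarrow> real. bounded_linear f \<Longrightarrow> (SUP x\<in>B'. f x) \<le> (SUP x\<in>B. f x)"
    and BsubB': "B \<subseteq> B'"
    and S: "is_slice B' S"
  shows "\<exists>T u. is_slice C T \<and> u \<in> cball 0 \<delta> \<and> (\<forall>c\<in>T. c + u \<in> S)"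
proof -
  obtain f \<alpha> where bl: "bounded_linear f" and fnz: "f \<noteq> (\<lambda>_. 0)" and ap: "\<alpha> > 0"
    and Sdef: "S = slice B' f \<alpha>" using S unfolding is_slice_def by blast
  have lin: "\<And>x y. f (x + y) = f x + f y" "\<And>c x. f (c *\<^sub>R x) = c * f x"
    using bl by (auto simp: linear_simps)
  have bC: "bdd_above (f ` C)" using bl_bdd[OF bl C(2)] .
  have bD: "bdd_above (f ` cball 0 \<delta>)" using bl_bdd[OF bl, of "cball 0 \<delta>" \<delta>] by simp
  define SC where "SC = (SUP x\<in>C. f x)"
  define SU where "SU = (SUP x\<in>cball 0 \<delta>. f x)"
  obtain c0 where c0: "c0 \<in> C" "SC - \<alpha>/2 < f c0"
    using less_cSUP_iff[OF C(1) bC, of "SC - \<alpha>/2"] ap unfolding SC_def by auto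
  obtain u where u: "u \<in> cball 0 \<delta>" "SU - \<alpha>/2 < f u"
    using less_cSUP_iff[OF _ bD, of "SU - \<alpha>/2"] ap dp unfolding SU_def by auto
  define T where "T = slice C f (\<alpha>/2)"
  have "c0 \<in> T" using c0 unfolding T_def slice_def SC_def by auto
  hence "bounded_linear f \<and> f \<noteq> (\<lambda>_. 0) \<and> \<alpha>/2 > 0 \<and> T = slice C f (\<alpha>/2) \<and> T \<noteq> {}"
    using bl fnz half_gt_zero[OF ap] T_def by blast
  hence sT: "is_slice C T" unfolding is_slice_def by blast
  have "(0::'a) \<in> cball 0 \<delta>" using dp by simp
  hence "c0 + 0 \<in> B" using c0(1) unfolding BB by blast
  hence Bne: "B \<noteq> {}" by blast
  have SB: "(SUP x\<in>B. f x) \<le> SC + SU"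
  proof (rule cSUP_least[OF Bne])
    fix z assume "z \<in> B"
    then obtain x y where xy: "z = x + y" "x \<in> C" "y \<in> cball 0 \<delta>" unfolding BB by blast
    have "f x \<le> SC" unfolding SC_def using xy(2) bC by (rule cSUP_upper)
    moreover have "f y \<le> SU" unfolding SU_def using xy(3) bD by (rule cSUP_upper)
    ultimately show "f z \<le> SC + SU" using xy(1) lin by simp
  qed
  have "\<forall>c\<in>T. c + u \<in> S"
  proof
    fix c assume "c \<in> T"
    hence c: "c \<in> C" "SC - \<alpha>/2 < f c" unfolding T_def slice_def SC_def by auto
    have inB: "c + u \<in> B" unfolding BB using c(1) u(1) by blast
    have "(SUP x\<in>B'. f x) - \<alpha> < f (c + u)"
    proof -
      have "f (c + u) = f c + f u" by (rule lin(1))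
      moreover have "(SUP x\<in>B'. f x) \<le> (SUP x\<in>B. f x)" by (rule B'sup[OF bl])
      ultimately show ?thesis using SB c(2) u(2) by linarith
    qed
    thus "c + u \<in> S" unfolding Sdef slice_def using inB BsubB' by auto
  qed
  thus ?thesis using sT u(1) by blast
qed


theorem mainTheorem12:
  fixes C :: "'a::banach set"
  assumes "C \<noteq> {}" and "C \<subseteq> cball 0 1" and "convex C" and "uminus ` C = C"
    and "closed C"
    and "\<And>D. is_ccs C D \<Longrightarrow> ndiam norm D = 2"
  shows "\<forall>\<epsilon>>0. \<exists>N::'a \<Rightarrow> real. equiv_norm N \<and>
           (\<forall>D. is_ccs {x. N x \<le> 1} D \<longrightarrow> ndiam N D \<ge> 2 - \<epsilon>)"
proof (intro allI impI)
  fix \<epsilon> :: real assume ep: "\<epsilon> > 0"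
  define \<delta> where "\<delta> = \<epsilon> / 2"
  have dp: "0 < \<delta>" using ep by (simp add: \<delta>_def)
  define B where "B = {x + y | x y. x \<in> C \<and> y \<in> cball (0::'a) \<delta>}"
  obtain c1 where c1: "c1 \<in> C" using assms(1) by blast
  have negC: "- x \<in> C" if "x \<in> C" for x
  proof -
    have "- x \<in> uminus ` C" using that by (rule imageI)
    thus ?thesis using assms(4) by simp
  qed
  have "(1/2) *\<^sub>R c1 + (1/2) *\<^sub>R (- c1) \<in> C"
    using convexD[OF assms(3) c1 negC[OF c1], of "1/2" "1/2"] by simp
  hence zC: "0 \<in> C" by (simp add: scaleR_right_diff_distrib)
  have gs: "gset B \<delta> (1 + \<delta>)"
  proof
    have "{x + y |x y. x \<in> C \<and> y \<in> cball 0 \<delta>} = (\<Union>x\<in>C. \<Union>y\<in>cball (0::'a) \<delta>. {x + y})" by blast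
    thus "convex B" unfolding B_def using convex_sums[OF assms(3) convex_cball] by simp
    show "\<And>b. b \<in> B \<Longrightarrow> - b \<in> B"
    proof -
      fix b assume "b \<in> B"
      then obtain x y where "b = x + y" "x \<in> C" "y \<in> cball 0 \<delta>" unfolding B_def by blast
      moreover have "- b = (- x) + (- y)" using \<open>b = x + y\<close> by simp
      moreover have "- y \<in> cball 0 \<delta>" using \<open>y \<in> cball 0 \<delta>\<close> by simp
      moreover have "- x \<in> C" using negC \<open>x \<in> C\<close> by blast
      ultimately show "- b \<in> B" unfolding B_def by blast
    qed
    show "0 < \<delta>" by (rule dp)
    show "cball 0 \<delta> \<subseteq> B"
    proof
      fix y assume "y \<in> cball (0::'a) \<delta>"
      moreover have "y = 0 + y" by simp
      ultimately show "y \<in> B" unfolding B_def using zC by blast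
    qed
    show "B \<subseteq> cball 0 (1 + \<delta>)"
    proof
      fix b assume "b \<in> B"
      then obtain x y where xy: "b = x + y" "x \<in> C" "y \<in> cball 0 \<delta>" unfolding B_def by blast
      have "norm x \<le> 1" using xy(2) assms(2) by auto
      moreover have "norm y \<le> \<delta>" using xy(3) by auto
      ultimately show "b \<in> cball 0 (1 + \<delta>)" using xy(1) norm_triangle_ineq[of x y] by auto
    qed
    show "0 < 1 + \<delta>" using dp by simp
  qed
  interpret g: gset B \<delta> "1 + \<delta>" by (rule gs)
  define N where "N = gau B"
  define B' where "B' = {x. N x \<le> 1}"
  have BsubB': "B \<subseteq> B'" unfolding B'_def N_def using g.gau_B by blast
  have B'ball: "B' \<subseteq> cball 0 (1 + \<delta>)" unfolding B'_def N_def using g.gau_ball_norm by auto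
  have B'sup: "(SUP x\<in>B'. f x) \<le> (SUP x\<in>B. f x)" if bl: "bounded_linear f" for f :: "'a \<Rightarrow> real"
  proof -
    have bB: "bdd_above (f ` B)" by (rule bl_bdd[OF bl g.outer])
    define SB where "SB = (SUP x\<in>B. f x)"
    have "0 \<in> B'" using BsubB' g.zero_in by blast
    hence ne: "B' \<noteq> {}" by blast
    show ?thesis
    proof (rule cSUP_least[OF ne])
      fix x assume x: "x \<in> B'"
      show "f x \<le> (SUP x\<in>B. f x)"
      proof (rule field_le_epsilon)
        fix e :: real assume e: "0 < e"
        define h where "h = e / (\<bar>SB\<bar> + 1)"
        have hp: "0 < h" using e by (simp add: h_def add_pos_nonneg)
        have "(1/(1+h)) *\<^sub>R x \<in> B" using g.gau_unit[of x h] x hp unfolding B'_def N_def by simp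
        hence "f ((1/(1+h)) *\<^sub>R x) \<le> SB" unfolding SB_def using bB by (rule cSUP_upper)
        hence le1: "f x / (1+h) \<le> SB" using bl by (simp add: linear_simps)
        have "f x \<le> (1+h) * SB" using le1 hp by (simp add: field_simps)
        also have "\<dots> = SB + h * SB" by (simp add: algebra_simps)
        also have "h * SB \<le> h * \<bar>SB\<bar>" using hp by (simp add: mult_left_mono)
        hence "SB + h * SB \<le> SB + h * (\<bar>SB\<bar> + 1)" using hp unfolding distrib_left mult_1_right by linarith
        also have "h * (\<bar>SB\<bar> + 1) = e" unfolding h_def by (simp add: add_pos_nonneg)
        finally show "f x \<le> (SUP x\<in>B. f x) + e" unfolding SB_def .
      qed
    qed
  qed
  have eqN: "equiv_norm N" unfolding N_def by (rule g.gau_equiv)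
  have "\<forall>D'. is_ccs B' D' \<longrightarrow> ndiam N D' \<ge> 2 - \<epsilon>"
  proof (intro allI impI)
    fix D' assume "is_ccs B' D'"
    then obtain n :: nat and l :: "nat \<Rightarrow> real" and S :: "nat \<Rightarrow> 'a set" where n: "n \<ge> 1" and lS: "\<forall>i<n. l i > 0 \<and> is_slice B' (S i)"
      and lsum: "(\<Sum>i<n. l i) = 1" and D'def: "D' = {(\<Sum>i<n. l i *\<^sub>R s i) | s. \<forall>i<n. s i \<in> S i}"
      unfolding is_ccs_def by blast
    have "\<forall>i. \<exists>p. i < n \<longrightarrow> is_slice C (fst p) \<and> snd p \<in> cball 0 \<delta> \<and> (\<forall>c\<in>fst p. c + snd p \<in> S i)"
    proof
      fix i
      show "\<exists>p. i < n \<longrightarrow> is_slice C (fst p) \<and> snd p \<in> cball 0 \<delta> \<and> (\<forall>c\<in>fst p. c + snd p \<in> S i)"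
      proof (cases "i < n")
        case True
        hence "is_slice B' (S i)" using lS by blast
        then obtain T u where "is_slice C T \<and> u \<in> cball 0 \<delta> \<and> (\<forall>c\<in>T. c + u \<in> S i)"
          using key[OF assms(1,2) dp B_def B'sup BsubB'] by blast
        thus ?thesis by (intro exI[of _ "(T, u)"]) simp
      qed simp
    qed
    hence "\<exists>p. \<forall>i. i < n \<longrightarrow> is_slice C (fst (p i)) \<and> snd (p i) \<in> cball 0 \<delta> \<and> (\<forall>c\<in>fst (p i). c + snd (p i) \<in> S i)"
      by (rule choice)
    then obtain p where p: "\<And>i. i < n \<Longrightarrow> is_slice C (fst (p i)) \<and> snd (p i) \<in> cball 0 \<delta> \<and> (\<forall>c\<in>fst (p i). c + snd (p i) \<in> S i)"
      by blast
    define T where "T i = fst (p i)" for i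
    define u where "u i = snd (p i)" for i
    have Tsl: "\<And>i. i < n \<Longrightarrow> is_slice C (T i)" and ub: "\<And>i. i < n \<Longrightarrow> u i \<in> cball 0 \<delta>"
      and Tu: "\<And>i c. i < n \<Longrightarrow> c \<in> T i \<Longrightarrow> c + u i \<in> S i"
      using p unfolding T_def u_def by auto
    have "\<forall>i. \<exists>x. i < n \<longrightarrow> x \<in> T i" using Tsl unfolding is_slice_def by blast
    hence "\<exists>s0. \<forall>i. i < n \<longrightarrow> s0 i \<in> T i" by (rule choice)
    then obtain s0 where s0: "\<And>i. i < n \<Longrightarrow> s0 i \<in> T i" by blast
    define D where "D = {(\<Sum>i<n. l i *\<^sub>R s i) | s. \<forall>i<n. s i \<in> T i}"
    have "is_ccs C D" unfolding is_ccs_def D_def using n lS lsum Tsl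
      by (intro exI[of _ n] exI[of _ l] exI[of _ T] conjI) simp_all
    hence diam2: "ndiam norm D = 2" by (rule assms(6))
    have "(\<Sum>i<n. l i *\<^sub>R s0 i) \<in> D" unfolding D_def using s0
      by (intro CollectI exI[of _ s0]) simp
    hence Dne: "D \<noteq> {}" by blast
    define y0 where "y0 = (\<Sum>i<n. l i *\<^sub>R u i)"
    have shift: "d + y0 \<in> D'" if "d \<in> D" for d
    proof -
      obtain s where s: "d = (\<Sum>i<n. l i *\<^sub>R s i)" "\<forall>i<n. s i \<in> T i"
        using \<open>d \<in> D\<close> unfolding D_def by blast
      have "d + y0 = (\<Sum>i<n. l i *\<^sub>R (s i + u i))"
        unfolding s(1) y0_def by (simp add: sum.distrib scaleR_add_right)
      moreover have "\<forall>i<n. s i + u i \<in> S i" using s(2) Tu by blast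
      ultimately show ?thesis unfolding D'def
        by (intro CollectI exI[of _ "\<lambda>i. s i + u i"]) simp
    qed
    have D'B': "D' \<subseteq> cball 0 (1 + \<delta>)"
    proof
      fix z assume "z \<in> D'"
      then obtain s where s: "z = (\<Sum>i<n. l i *\<^sub>R s i)" "\<forall>i<n. s i \<in> S i"
        unfolding D'def by blast
      have "\<forall>i<n. s i \<in> B'" using s(2) lS unfolding is_slice_def slice_def by blast
      hence nb: "\<forall>i<n. norm (s i) \<le> 1 + \<delta>" using B'ball by auto
      have "norm z \<le> (\<Sum>i<n. norm (l i *\<^sub>R s i))" unfolding s(1) by (rule norm_sum)
      also have "\<dots> \<le> (\<Sum>i<n. l i * (1 + \<delta>))"
      proof (rule sum_mono)
        fix i assume "i \<in> {..<n}"
        hence "l i > 0" "norm (s i) \<le> 1 + \<delta>" using lS nb by auto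
        thus "norm (l i *\<^sub>R s i) \<le> l i * (1 + \<delta>)" by (simp add: mult_left_mono)
      qed
      also have "\<dots> = 1 + \<delta>" using lsum by (simp add: sum_distrib_right[symmetric])
      finally show "z \<in> cball 0 (1 + \<delta>)" by simp
    qed
    have bddN: "bdd_above ((\<lambda>p. N (fst p - snd p)) ` (D' \<times> D'))"
    proof -
      have "N (fst p - snd p) \<le> 2 * (1 + \<delta>) / \<delta>" if "p \<in> D' \<times> D'" for p
      proof -
        have "norm (fst p) \<le> 1 + \<delta>" "norm (snd p) \<le> 1 + \<delta>" using that D'B' by auto
        hence "norm (fst p) + norm (snd p) \<le> (1 + \<delta>) + (1 + \<delta>)" by (rule add_mono)
        hence "norm (fst p - snd p) \<le> 2 * (1 + \<delta>)"
          using norm_triangle_ineq4[of "fst p" "snd p"] by simp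
        hence "norm (fst p - snd p) / \<delta> \<le> 2 * (1 + \<delta>) / \<delta>"
          using dp by (simp add: divide_right_mono)
        moreover have "N (fst p - snd p) \<le> norm (fst p - snd p) / \<delta>" unfolding N_def by (rule g.gau_upper)
        ultimately show ?thesis by (rule order_trans[rotated])
      qed
      thus ?thesis unfolding bdd_above_def by (intro exI[of _ "2 * (1 + \<delta>) / \<delta>"]) blast
    qed
    have "2 \<le> (1 + \<delta>) * ndiam N D'"
    proof -
      have "ndiam norm D \<le> (1 + \<delta>) * ndiam N D'" unfolding ndiam_def
      proof (rule cSUP_least)
        show "D \<times> D \<noteq> {}" using Dne by simp
      next
        fix q assume q: "q \<in> D \<times> D"
        obtain d1 d2 where q': "q = (d1, d2)" "d1 \<in> D" "d2 \<in> D" using q by auto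
        have "norm (d1 - d2) / (1 + \<delta>) \<le> N (d1 - d2)" unfolding N_def by (rule g.gau_lower)
        hence a: "norm (d1 - d2) \<le> (1 + \<delta>) * N (d1 - d2)" using dp by (simp add: field_simps)
        have "N (d1 - d2) = N ((d1 + y0) - (d2 + y0))" by simp
        also have "\<dots> \<le> (SUP p\<in>D' \<times> D'. N (fst p - snd p))"
          using cSUP_upper[OF _ bddN, of "(d1 + y0, d2 + y0)"] shift q' by auto
        finally have "(1 + \<delta>) * N (d1 - d2) \<le> (1 + \<delta>) * (SUP p\<in>D' \<times> D'. N (fst p - snd p))"
          using dp by (simp add: mult_left_mono)
        thus "norm (fst q - snd q) \<le> (1 + \<delta>) * (SUP p\<in>D' \<times> D'. N (fst p - snd p))"
          using a q' by simp
      qed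
      thus ?thesis using diam2 by simp
    qed
    show "ndiam N D' \<ge> 2 - \<epsilon>"
    proof (rule ccontr)
      assume "\<not> ?thesis"
      hence lt: "ndiam N D' < 2 - \<epsilon>" by simp
      have "(1 + \<delta>) * ndiam N D' < (1 + \<delta>) * (2 - \<epsilon>)" using lt dp by simp
      also have "\<dots> = 2 - \<epsilon> * \<epsilon> / 2" unfolding \<delta>_def by (simp add: field_simps)
      also have "\<dots> \<le> 2" using ep by simp
      finally show False using \<open>2 \<le> (1 + \<delta>) * ndiam N D'\<close> by simp
    qed
  qed
  show "\<exists>N::'a \<Rightarrow> real. equiv_norm N \<and> (\<forall>D. is_ccs {x. N x \<le> 1} D \<longrightarrow> ndiam N D \<ge> 2 - \<epsilon>)"
  proof (rule exI[of _ N], rule conjI[OF eqN])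
    show "\<forall>D. is_ccs {x. N x \<le> 1} D \<longrightarrow> ndiam N D \<ge> 2 - \<epsilon>"
      using \<open>\<forall>D'. is_ccs B' D' \<longrightarrow> ndiam N D' \<ge> 2 - \<epsilon>\<close> unfolding B'_def .
  qed
qed

end
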